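(* Let $S$ be an entropy function for a finite set $X$, let $X'\subset X$, let $R$ be a new element not in $X$, $Y:=X'\cup\{R\}$, and let $T$ be the entropy function on $Y$ defined by $T(A):=S(A)$ and $T(A\cup\{R\}):=S(A\cup(X\setminus X'))$ for $A\subseteq X'$. Given any EDF $g$ for $T$, there exists an EDF $f$ for $S$ with $f(x)=g(x)$ for all $x\in X'$ and $\sum_{x\in X\setminus X'}f(x)=g(R)$.
   Context: An entropy function for a finite set $X$ is a function $S:2^X\to[0,\infty)$ with $S(\emptyset)=0$, $S(A)+S(B)\ge S(A\cap B)+S(A\cup B)$ and $S(A)+S(B)\ge S(A\setminus B)+S(B\setminus A)$ for all $A,B\subseteq X$. An entanglement distribution function (EDF) for $S$ is a function $f:X\to\mathbb R$ with $\big|\sum_{x\in A}f(x)\big|\le S(A)$ for all $A\subseteq X$. *)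

theory Defs
  imports Main "HOL.Real"
begin

definition entropy_function :: "'a set \<Rightarrow> ('a set \<Rightarrow> real) \<Rightarrow> bool" where
  "entropy_function X S \<longleftrightarrow> finite X \<and> S {} = 0 \<and>
     (\<forall>A. A \<subseteq> X \<longrightarrow> S A \<ge> 0) \<and>
     (\<forall>A B. A \<subseteq> X \<longrightarrow> B \<subseteq> X \<longrightarrow> S A + S B \<ge> S (A \<inter> B) + S (A \<union> B)) \<and>
     (\<forall>A B. A \<subseteq> X \<longrightarrow> B \<subseteq> X \<longrightarrow> S A + S B \<ge> S (A - B) + S (B - A))"

definition EDF :: "'a set \<Rightarrow> ('a set \<Rightarrow> real) \<Rightarrow> ('a \<Rightarrow> real) \<Rightarrow> bool" where
  "EDF X S f \<longleftrightarrow> (\<forall>A. A \<subseteq> X \<longrightarrow> \<bar>\<Sum>x\<in>A. f x\<bar> \<le> S A)"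

definition merged_entropy :: "'a set \<Rightarrow> 'a set \<Rightarrow> 'a \<Rightarrow> ('a set \<Rightarrow> real) \<Rightarrow> 'a set \<Rightarrow> real" where
  "merged_entropy X X' R S B =
     (if R \<in> B then S ((B - {R}) \<union> (X - X')) else S B)"

end

theory Submission
  imports Defs
begin

lemma ent_sub:
  assumes "entropy_function X S" "A \<subseteq> X" "B \<subseteq> X"
  shows "S (A \<inter> B) + S (A \<union> B) \<le> S A + S B"
  using assms unfolding entropy_function_def by blast

lemma ent_wm:
  assumes "entropy_function X S" "A \<subseteq> X" "B \<subseteq> X"
  shows "S (A - B) + S (B - A) \<le> S A + S B"
  using assms unfolding entropy_function_def by blast

lemma pick_between:
  fixes l u :: "'b \<Rightarrow> real"
  assumes "finite I" "I \<noteq> {}" "\<And>i j. i \<in> I \<Longrightarrow> j \<in> I \<Longrightarrow> l i \<le> u j"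
  shows "\<exists>t. \<forall>i\<in>I. l i \<le> t \<and> t \<le> u i"
proof -
  have "Max (l ` I) \<in> l ` I" using assms by simp
  then obtain k where k: "k \<in> I" "Max (l ` I) = l k" by auto
  show ?thesis
  proof (rule exI[of _ "Max (l ` I)"], intro ballI conjI)
    fix i assume i: "i \<in> I"
    show "l i \<le> Max (l ` I)" using assms(1) i by (intro Max_ge) auto
    show "Max (l ` I) \<le> u i" using k assms(3) i by simp
  qed
qed

lemma sum_diff_swap:
  fixes g :: "'a \<Rightarrow> real"
  assumes "finite A" "finite B"
  shows "sum g B - sum g A = sum g (B - A) - sum g (A - B)"
proof -
  have "sum g A = sum g (A \<inter> B) + sum g (A - B)" using assms sum.Int_Diff by blast
  moreover have "sum g B = sum g (B \<inter> A) + sum g (B - A)" using assms sum.Int_Diff by blast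
  ultimately show ?thesis by (simp add: Int_commute)
qed

lemma lift:
  fixes S :: "'a set \<Rightarrow> real"
  assumes ent: "entropy_function X S" and fin: "finite Z"
  shows "\<And>X' g r. X' \<inter> Z = {} \<Longrightarrow> X' \<union> Z \<subseteq> X \<Longrightarrow>
    (\<forall>A. A \<subseteq> X' \<longrightarrow> \<bar>sum g A\<bar> \<le> S A \<and> \<bar>sum g A + r\<bar> \<le> S (A \<union> Z)) \<Longrightarrow>
    \<exists>f. (\<forall>x\<in>X'. f x = g x) \<and> sum f Z = r \<and> (\<forall>A. A \<subseteq> X' \<union> Z \<longrightarrow> \<bar>sum f A\<bar> \<le> S A)"
  using fin
proof (induction Z rule: finite_induct)
  case empty
  fix X' g r
  assume d: "X' \<inter> {} = {}" and sub: "X' \<union> {} \<subseteq> X"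
    and h: "\<forall>A. A \<subseteq> X' \<longrightarrow> \<bar>sum g A\<bar> \<le> S A \<and> \<bar>sum g A + r\<bar> \<le> S (A \<union> {})"
  have "\<bar>r\<bar> \<le> S {}" using h[rule_format, of "{}"] by simp
  moreover have "S {} = 0" using ent unfolding entropy_function_def by simp
  ultimately have "r = 0" by simp
  then show "\<exists>f. (\<forall>x\<in>X'. f x = g x) \<and> sum f {} = r \<and> (\<forall>A. A \<subseteq> X' \<union> {} \<longrightarrow> \<bar>sum f A\<bar> \<le> S A)"
    using h by (intro exI[of _ g]) auto
next
  case (insert z Z')
  fix X' g r
  assume d: "X' \<inter> insert z Z' = {}" and sub: "X' \<union> insert z Z' \<subseteq> X"
    and h: "\<forall>A. A \<subseteq> X' \<longrightarrow> \<bar>sum g A\<bar> \<le> S A \<and> \<bar>sum g A + r\<bar> \<le> S (A \<union> insert z Z')"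
  have finX: "finite X" using ent unfolding entropy_function_def by simp
  have finX': "finite X'" using sub finX finite_subset by blast
  have zX': "z \<notin> X'" using d by auto
  have ZX': "X' \<inter> Z' = {}" using d by auto
  define l1 where "l1 A = - S (insert z A) - sum g A" for A
  define u1 where "u1 A = S (insert z A) - sum g A" for A
  define l2 where "l2 A = sum g A + r - S (A \<union> Z')" for A
  define u2 where "u2 A = sum g A + r + S (A \<union> Z')" for A
  have key: "max (l1 A) (l2 A) \<le> min (u1 B) (u2 B)" if A: "A \<subseteq> X'" and B: "B \<subseteq> X'" for A B
  proof -
    have fA: "finite A" and fB: "finite B" using A B finX' finite_subset by auto
    have hA: "\<bar>sum g A\<bar> \<le> S A" "\<bar>sum g A + r\<bar> \<le> S (A \<union> insert z Z')" using h A by auto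
    have hB: "\<bar>sum g B\<bar> \<le> S B" "\<bar>sum g B + r\<bar> \<le> S (B \<union> insert z Z')" using h B by auto
    have "B - A \<subseteq> X'" "A - B \<subseteq> X'" "A \<inter> B \<subseteq> X'" using A B by auto
    then have hBA: "\<bar>sum g (B - A)\<bar> \<le> S (B - A)" and hAB: "\<bar>sum g (A - B)\<bar> \<le> S (A - B)"
      and hI: "\<bar>sum g (A \<inter> B)\<bar> \<le> S (A \<inter> B)" using h by blast+
    have hU: "\<bar>sum g (A \<union> B) + r\<bar> \<le> S (A \<union> B \<union> insert z Z')" using h A B
      by (metis (no_types, lifting) le_sup_iff)
    have sw: "sum g B - sum g A = sum g (B - A) - sum g (A - B)" using sum_diff_swap fA fB by blast
    have ui: "sum g A + sum g B = sum g (A \<union> B) + sum g (A \<inter> B)"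
      using sum.union_inter[OF fA fB, of g] by linarith
    have zA: "insert z A \<subseteq> X" "insert z B \<subseteq> X" using A B sub by auto
    have ZA: "A \<union> Z' \<subseteq> X" "B \<union> Z' \<subseteq> X" using A B sub by auto
    have "S (insert z B - insert z A) + S (insert z A - insert z B) \<le> S (insert z B) + S (insert z A)"
      using ent_wm[OF ent zA(2) zA(1)] .
    moreover have "insert z B - insert z A = B - A" "insert z A - insert z B = A - B"
      using zX' A B by auto
    ultimately have i1: "sum g B - sum g A \<le> S (insert z A) + S (insert z B)"
      using sw hBA hAB by auto
    have "S ((A \<union> Z') - (B \<union> Z')) + S ((B \<union> Z') - (A \<union> Z')) \<le> S (A \<union> Z') + S (B \<union> Z')"
      using ent_wm[OF ent ZA] .
    moreover have "(A \<union> Z') - (B \<union> Z') = A - B" "(B \<union> Z') - (A \<union> Z') = B - A"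
      using ZX' A B by auto
    ultimately have i2: "sum g A - sum g B \<le> S (A \<union> Z') + S (B \<union> Z')"
      using sw hBA hAB by auto
    have s3: "S (insert z A \<inter> (B \<union> Z')) + S (insert z A \<union> (B \<union> Z')) \<le> S (insert z A) + S (B \<union> Z')"
      using ent_sub[OF ent zA(1) ZA(2)] .
    have e3: "insert z A \<inter> (B \<union> Z') = A \<inter> B" "insert z A \<union> (B \<union> Z') = A \<union> B \<union> insert z Z'"
      using ZX' A B zX' insert.hyps(2) by auto
    have i3: "\<bar>sum g A + sum g B + r\<bar> \<le> S (insert z A) + S (B \<union> Z')"
      using s3 e3 ui hU hI by auto
    have s4: "S (insert z B \<inter> (A \<union> Z')) + S (insert z B \<union> (A \<union> Z')) \<le> S (insert z B) + S (A \<union> Z')"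
      using ent_sub[OF ent zA(2) ZA(1)] .
    have e4: "insert z B \<inter> (A \<union> Z') = A \<inter> B" "insert z B \<union> (A \<union> Z') = A \<union> B \<union> insert z Z'"
      using ZX' A B zX' insert.hyps(2) by auto
    have i4: "\<bar>sum g A + sum g B + r\<bar> \<le> S (insert z B) + S (A \<union> Z')"
      using s4 e4 ui hU hI by auto
    show ?thesis using i1 i2 i3 i4 unfolding l1_def l2_def u1_def u2_def by auto
  qed
  obtain t where t: "\<forall>A\<in>Pow X'. max (l1 A) (l2 A) \<le> t \<and> t \<le> min (u1 A) (u2 A)"
    using pick_between[of "Pow X'" "\<lambda>A. max (l1 A) (l2 A)" "\<lambda>A. min (u1 A) (u2 A)"] key finX'
    by auto
  define g' where "g' = g(z := t)"
  have sg': "sum g' A = sum g A" if "A \<subseteq> X'" for A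
    unfolding g'_def using that zX' by (intro sum.cong) auto
  have h': "\<forall>A. A \<subseteq> insert z X' \<longrightarrow> \<bar>sum g' A\<bar> \<le> S A \<and> \<bar>sum g' A + (r - t)\<bar> \<le> S (A \<union> Z')"
  proof (intro allI impI)
    fix A assume A: "A \<subseteq> insert z X'"
    show "\<bar>sum g' A\<bar> \<le> S A \<and> \<bar>sum g' A + (r - t)\<bar> \<le> S (A \<union> Z')"
    proof (cases "z \<in> A")
      case True
      define A0 where "A0 = A - {z}"
      have A0: "A0 \<subseteq> X'" "A = insert z A0" "z \<notin> A0" using A True A0_def by auto
      have fA0: "finite A0" using A0 finX' finite_subset by blast
      have "sum g' A = t + sum g A0" using A0 fA0 sg' by (simp add: g'_def)
      moreover have "A \<union> Z' = A0 \<union> insert z Z'" using A0 by auto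
      moreover have "\<bar>sum g A0 + r\<bar> \<le> S (A0 \<union> insert z Z')" using h A0 by auto
      moreover have "max (l1 A0) (l2 A0) \<le> t \<and> t \<le> min (u1 A0) (u2 A0)" using t A0 by auto
      ultimately show ?thesis unfolding l1_def u1_def using A0 by auto
    next
      case False
      then have A0: "A \<subseteq> X'" using A by auto
      have "max (l1 A) (l2 A) \<le> t \<and> t \<le> min (u1 A) (u2 A)" using t A0 by auto
      then show ?thesis using sg'[OF A0] h A0 unfolding l2_def u2_def by auto
    qed
  qed
  have d': "insert z X' \<inter> Z' = {}" using d insert.hyps(2) by auto
  have sub': "insert z X' \<union> Z' \<subseteq> X" using sub by auto
  obtain f where f: "\<forall>x\<in>insert z X'. f x = g' x" "sum f Z' = r - t"
    "\<forall>A. A \<subseteq> insert z X' \<union> Z' \<longrightarrow> \<bar>sum f A\<bar> \<le> S A"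
    using insert.IH[OF d' sub' h'] by blast
  have "f z = t" using f(1) by (simp add: g'_def)
  then have "sum f (insert z Z') = r" using f(2) insert.hyps by simp
  moreover have "\<forall>x\<in>X'. f x = g x" using f(1) zX' by (auto simp: g'_def)
  moreover have "X' \<union> insert z Z' = insert z X' \<union> Z'" by auto
  ultimately show "\<exists>f. (\<forall>x\<in>X'. f x = g x) \<and> sum f (insert z Z') = r \<and>
      (\<forall>A. A \<subseteq> X' \<union> insert z Z' \<longrightarrow> \<bar>sum f A\<bar> \<le> S A)"
    using f(3) by metis
qed

theorem theorem24:
  fixes X X' :: "'a set" and R :: 'a and S :: "'a set \<Rightarrow> real" and g :: "'a \<Rightarrow> real"
  assumes "entropy_function X S"
    and "X' \<subseteq> X"
    and "R \<notin> X"
    and "EDF (insert R X') (merged_entropy X X' R S) g"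
  shows "\<exists>f. EDF X S f \<and> (\<forall>x\<in>X'. f x = g x) \<and> (\<Sum>x\<in>X - X'. f x) = g R"
proof -
  have finX: "finite X" using assms(1) unfolding entropy_function_def by simp
  have h: "\<forall>A. A \<subseteq> X' \<longrightarrow> \<bar>sum g A\<bar> \<le> S A \<and> \<bar>sum g A + g R\<bar> \<le> S (A \<union> (X - X'))"
  proof (intro allI impI conjI)
    fix A assume A: "A \<subseteq> X'"
    have RA: "R \<notin> A" using A assms(2,3) by auto
    have fA: "finite A" using A assms(2) finX finite_subset by blast
    show "\<bar>sum g A\<bar> \<le> S A"
      using assms(4) A RA unfolding EDF_def merged_entropy_def
      by (metis subset_insertI2)
    have "\<bar>sum g (insert R A)\<bar> \<le> merged_entropy X X' R S (insert R A)"
      using assms(4) A unfolding EDF_def by (meson insert_mono)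
    then show "\<bar>sum g A + g R\<bar> \<le> S (A \<union> (X - X'))"
      using RA fA unfolding merged_entropy_def by (simp add: add.commute)
  qed
  obtain f where f: "\<forall>x\<in>X'. f x = g x" "sum f (X - X') = g R"
    "\<forall>A. A \<subseteq> X' \<union> (X - X') \<longrightarrow> \<bar>sum f A\<bar> \<le> S A"
    using lift[OF assms(1), of "X - X'" X' g "g R"] finX h assms(2) by auto
  have "X' \<union> (X - X') = X" using assms(2) by auto
  then show ?thesis using f unfolding EDF_def by auto
qed

end
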